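(* Let $A\in\mathbb{Z}^{d\times n}$, $\mathbf{b}\in\mathbb{Z}^d$, $\mathbf{c}\in\mathbb{Z}^n$, $\mathbf{u}\in\mathbb{Z}_{\ge0}^n$. Let $\mathbf{x}_k$ be feasible and let $\alpha_1\mathbf{z}_1,\dots,\alpha_j\mathbf{z}_j$ ($j\ge2$) be successive steepest-descent augmentations, i.e. $\alpha_i\mathbf{z}_i$ is a steepest-descent augmentation relative to $\mathbf{x}_k+\sum_{l<i}\alpha_l\mathbf{z}_l$ for each $i$. If $\mathbf{z}_1$ and $\mathbf{z}_j$ do not have the same sign pattern, then $-\mathbf{c}^\top\mathbf{z}_1/\|\mathbf{z}_1\|_1\ >\ -\mathbf{c}^\top\mathbf{z}_j/\|\mathbf{z}_j\|_1$.
   Context: Feasible means $A\mathbf{x}=\mathbf{b}$, $\mathbf{0}\le\mathbf{x}\le\mathbf{u}$, $\mathbf{x}\in\mathbb{Z}^n$. A steepest-descent augmentation relative to a feasible $\mathbf{x}$ is $\alpha\mathbf{s}$ where $\mathbf{s}\in\mathbb{Z}^n\setminus\{\mathbf{0}\}$, $A\mathbf{s}=\mathbf{0}$, $\mathbf{c}^\top\mathbf{s}<0$, $\alpha$ is a positive integer with $\mathbf{x}+\alpha\mathbf{s}$ feasible, and $-\mathbf{c}^\top\mathbf{s}/\|\mathbf{s}\|_1\ge-\mathbf{c}^\top\mathbf{z}/\|\mathbf{z}\|_1$ for every $\mathbf{z}\in\mathbb{Z}^n\setminus\{\mathbf{0}\}$ with $A\mathbf{z}=\mathbf{0}$ and $\mathbf{x}+\mathbf{z}$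 feasible. Two vectors $\mathbf{v},\mathbf{w}\in\mathbb{R}^n$ have the same sign pattern if $v_iw_i\ge0$ for all $i$ (i.e. there is no coordinate in which one is positive and the other negative). *)

theory Defs
  imports "HOL-Analysis.Analysis"
begin

text \<open>Vectors in Z^n are functions nat => int supported on {..<n};
  a d x n integer matrix is a function nat => nat => int (row, column).\<close>

definition supp_in :: "nat \<Rightarrow> (nat \<Rightarrow> int) \<Rightarrow> bool" where
  "supp_in n v \<longleftrightarrow> (\<forall>i. i \<ge> n \<longrightarrow> v i = 0)"

definition matvec :: "nat \<Rightarrow> (nat \<Rightarrow> nat \<Rightarrow> int) \<Rightarrow> (nat \<Rightarrow> int) \<Rightarrow> nat \<Rightarrow> int" where
  "matvec n A v = (\<lambda>r. \<Sum>i<n. A r i * v i)"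

definition dotp :: "nat \<Rightarrow> (nat \<Rightarrow> int) \<Rightarrow> (nat \<Rightarrow> int) \<Rightarrow> int" where
  "dotp n c v = (\<Sum>i<n. c i * v i)"

definition norm1 :: "nat \<Rightarrow> (nat \<Rightarrow> int) \<Rightarrow> int" where
  "norm1 n v = (\<Sum>i<n. \<bar>v i\<bar>)"

definition feasible ::
  "nat \<Rightarrow> nat \<Rightarrow> (nat \<Rightarrow> nat \<Rightarrow> int) \<Rightarrow> (nat \<Rightarrow> int) \<Rightarrow> (nat \<Rightarrow> int) \<Rightarrow> (nat \<Rightarrow> int) \<Rightarrow> bool" where
  "feasible d n A b u x \<longleftrightarrow> supp_in n x \<and> (\<forall>r<d. matvec n A x r = b r)
      \<and> (\<forall>i<n. 0 \<le> x i \<and> x i \<le> u i)"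

definition in_kernel :: "nat \<Rightarrow> nat \<Rightarrow> (nat \<Rightarrow> nat \<Rightarrow> int) \<Rightarrow> (nat \<Rightarrow> int) \<Rightarrow> bool" where
  "in_kernel d n A s \<longleftrightarrow> supp_in n s \<and> (\<forall>r<d. matvec n A s r = 0)"

definition descent_ratio :: "nat \<Rightarrow> (nat \<Rightarrow> int) \<Rightarrow> (nat \<Rightarrow> int) \<Rightarrow> real" where
  "descent_ratio n c s = - real_of_int (dotp n c s) / real_of_int (norm1 n s)"

definition sd_augmentation ::
  "nat \<Rightarrow> nat \<Rightarrow> (nat \<Rightarrow> nat \<Rightarrow> int) \<Rightarrow> (nat \<Rightarrow> int) \<Rightarrow> (nat \<Rightarrow> int) \<Rightarrow> (nat \<Rightarrow> int)
    \<Rightarrow> (nat \<Rightarrow> int) \<Rightarrow> int \<Rightarrow> (nat \<Rightarrow> int) \<Rightarrow> bool" where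
  "sd_augmentation d n A b c u x \<alpha> s \<longleftrightarrow>
     in_kernel d n A s \<and> s \<noteq> (\<lambda>_. 0) \<and> dotp n c s < 0 \<and> \<alpha> > 0
     \<and> feasible d n A b u (\<lambda>i. x i + \<alpha> * s i)
     \<and> (\<forall>z. in_kernel d n A z \<and> z \<noteq> (\<lambda>_. 0) \<and> feasible d n A b u (\<lambda>i. x i + z i)
            \<longrightarrow> descent_ratio n c s \<ge> descent_ratio n c z)"

definition same_sign_pattern :: "nat \<Rightarrow> (nat \<Rightarrow> int) \<Rightarrow> (nat \<Rightarrow> int) \<Rightarrow> bool" where
  "same_sign_pattern n v w \<longleftrightarrow> (\<forall>i<n. v i * w i \<ge> 0)"

end

theory Submission imports Defs begin

lemma feas_partial:
  assumes "feasible d n A b u x" "feasible d n A b u (\<lambda>i. x i + a * s i)" "a \<ge> 1"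
    "in_kernel d n A s"
  shows "feasible d n A b u (\<lambda>i. x i + s i)"
proof -
  have mv: "matvec n A (\<lambda>i. x i + s i) r = matvec n A x r + matvec n A s r" for r
    by (simp add: matvec_def distrib_left sum.distrib)
  have c: "0 \<le> x i + s i \<and> x i + s i \<le> u i" if "i < n" for i
  proof -
    have "0 \<le> x i" "x i \<le> u i" "0 \<le> x i + a * s i" "x i + a * s i \<le> u i"
      using assms(1,2) that unfolding feasible_def by auto
    moreover have "s i \<ge> 0 \<Longrightarrow> a * s i \<ge> s i" using assms(3)
      by (metis mult_le_cancel_right1 linorder_not_less order_less_le)
    moreover have "s i < 0 \<Longrightarrow> a * s i \<le> s i" using assms(3)
      by (simp add: mult_le_cancel_right1)
    ultimately show ?thesis by linarith
  qed
  show ?thesis using assms(1,4) c mv unfolding feasible_def in_kernel_def supp_in_def by auto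
qed

lemma norm_pos: "dotp n c v \<noteq> 0 \<Longrightarrow> norm1 n v > 0"
proof (rule ccontr)
  assume a: "dotp n c v \<noteq> 0" "\<not> norm1 n v > 0"
  have ge: "norm1 n v \<ge> 0" unfolding norm1_def by (simp add: sum_nonneg)
  hence "norm1 n v = 0" using a by simp
  hence "\<forall>i\<in>{..<n}. \<bar>v i\<bar> = 0" unfolding norm1_def
    by (subst (asm) sum_nonneg_eq_0_iff) auto
  hence "dotp n c v = 0" unfolding dotp_def by simp
  thus False using a by simp
qed

lemma ratio_eq: "norm1 n s > 0 \<Longrightarrow> - real_of_int (dotp n c s) = descent_ratio n c s * real_of_int (norm1 n s)"
  unfolding descent_ratio_def by simp

lemma dotp_lin: "finite L \<Longrightarrow> dotp n c (\<lambda>t. (\<Sum>l\<in>L. a l * w l t) + y t) = (\<Sum>l\<in>L. a l * dotp n c (w l)) + dotp n c y"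
  unfolding dotp_def
  by (simp add: distrib_left sum.distrib sum_distrib_left sum.swap[of _ L] mult.left_commute)

lemma matvec_lin: "finite L \<Longrightarrow> matvec n A (\<lambda>t. (\<Sum>l\<in>L. a l * w l t) + y t) r = (\<Sum>l\<in>L. a l * matvec n A (w l) r) + matvec n A y r"
  unfolding matvec_def
  by (simp add: distrib_left sum.distrib sum_distrib_left sum.swap[of _ L] mult.left_commute)

lemma kernel_lin: "finite L \<Longrightarrow> \<forall>l\<in>L. in_kernel d n A (w l) \<Longrightarrow> in_kernel d n A y \<Longrightarrow>
   in_kernel d n A (\<lambda>t. (\<Sum>l\<in>L. a l * w l t) + y t)"
  unfolding in_kernel_def supp_in_def by (simp add: matvec_lin)

lemma pt_le: "\<forall>l\<in>L. a l \<ge> (0::int) \<Longrightarrow> \<bar>(\<Sum>l\<in>L. a l * w l t) + y t\<bar> \<le> (\<Sum>l\<in>L. a l * \<bar>w l t\<bar>) + \<bar>y t\<bar>"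
proof -
  assume h: "\<forall>l\<in>L. a l \<ge> (0::int)"
  have "\<bar>(\<Sum>l\<in>L. a l * w l t)\<bar> \<le> (\<Sum>l\<in>L. \<bar>a l * w l t\<bar>)" by (rule sum_abs)
  also have "\<dots> = (\<Sum>l\<in>L. a l * \<bar>w l t\<bar>)" using h by (intro sum.cong) (auto simp: abs_mult)
  finally show ?thesis by (meson abs_triangle_ineq add_right_mono order_trans)
qed

lemma strict2: "(p::int) * q < 0 \<Longrightarrow> \<bar>p + q\<bar> < \<bar>p\<bar> + \<bar>q\<bar>"
  by (cases "p \<ge> 0"; cases "q \<ge> 0") (auto simp: mult_nonneg_nonneg mult_nonpos_nonpos mult_less_0_iff)

lemma pt_lt: assumes "finite L" "\<forall>l\<in>L. a l \<ge> (0::int)" "l0 \<in> L" "a l0 > 0" "w l0 t * y t < 0"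
  shows "\<bar>(\<Sum>l\<in>L. a l * w l t) + y t\<bar> < (\<Sum>l\<in>L. a l * \<bar>w l t\<bar>) + \<bar>y t\<bar>"
proof -
  have L: "L = insert l0 (L - {l0})" using assms(3) by auto
  have s1: "(\<Sum>l\<in>L. a l * w l t) = a l0 * w l0 t + (\<Sum>l\<in>L-{l0}. a l * w l t)"
    using assms(1,3) by (simp add: sum.remove)
  have s2: "(\<Sum>l\<in>L. a l * \<bar>w l t\<bar>) = a l0 * \<bar>w l0 t\<bar> + (\<Sum>l\<in>L-{l0}. a l * \<bar>w l t\<bar>)"
    using assms(1,3) by (simp add: sum.remove)
  have R: "\<bar>(\<Sum>l\<in>L-{l0}. a l * w l t)\<bar> \<le> (\<Sum>l\<in>L-{l0}. a l * \<bar>w l t\<bar>)"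
    using pt_le[of "L-{l0}" a w t "\<lambda>_. 0"] assms(2) by auto
  have "(a l0 * w l0 t) * y t < 0" using assms(4,5)
    by (metis mult.assoc mult_pos_neg)
  hence S: "\<bar>a l0 * w l0 t + y t\<bar> < a l0 * \<bar>w l0 t\<bar> + \<bar>y t\<bar>"
    using strict2 assms(4) by (fastforce simp: abs_mult)
  show ?thesis unfolding s1 s2 using R S abs_triangle_ineq[of "a l0 * w l0 t + y t" "(\<Sum>l\<in>L-{l0}. a l * w l t)"]
    by (simp add: algebra_simps)
qed

lemma norm_le: "finite L \<Longrightarrow> \<forall>l\<in>L. a l \<ge> (0::int) \<Longrightarrow>
  norm1 n (\<lambda>t. (\<Sum>l\<in>L. a l * w l t) + y t) \<le> (\<Sum>l\<in>L. a l * norm1 n (w l)) + norm1 n y"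
proof -
  assume f: "finite L" and h: "\<forall>l\<in>L. a l \<ge> (0::int)"
  have "(\<Sum>t<n. \<bar>(\<Sum>l\<in>L. a l * w l t) + y t\<bar>) \<le> (\<Sum>t<n. (\<Sum>l\<in>L. a l * \<bar>w l t\<bar>) + \<bar>y t\<bar>)"
    by (rule sum_mono) (rule pt_le[OF h])
  also have "\<dots> = (\<Sum>l\<in>L. a l * (\<Sum>t<n. \<bar>w l t\<bar>)) + (\<Sum>t<n. \<bar>y t\<bar>)"
    by (simp add: sum.distrib sum_distrib_left sum.swap[of _ L])
  finally show ?thesis by (simp add: norm1_def)
qed

lemma norm_lt: assumes "finite L" "\<forall>l\<in>L. a l \<ge> (0::int)" "lz \<in> L" "a lz > 0" "tz < n" "w lz tz * y tz < 0"
 shows "norm1 n (\<lambda>t. (\<Sum>l\<in>L. a l * w l t) + y t) < (\<Sum>l\<in>L. a l * norm1 n (w l)) + norm1 n y"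
  unfolding norm1_def
proof -
  have "(\<Sum>t<n. \<bar>(\<Sum>l\<in>L. a l * w l t) + y t\<bar>) < (\<Sum>t<n. (\<Sum>l\<in>L. a l * \<bar>w l t\<bar>) + \<bar>y t\<bar>)"
  proof (rule sum_strict_mono_ex1)
    show "\<exists>t\<in>{..<n}. \<bar>(\<Sum>l\<in>L. a l * w l t) + y t\<bar> < (\<Sum>l\<in>L. a l * \<bar>w l t\<bar>) + \<bar>y t\<bar>"
      using pt_lt[OF assms(1-4), of w tz y] assms(5,6) by blast
  qed (use pt_le[OF assms(2)] in auto)
  also have "\<dots> = (\<Sum>l\<in>L. a l * (\<Sum>t<n. \<bar>w l t\<bar>)) + (\<Sum>t<n. \<bar>y t\<bar>)"
    by (simp add: sum.distrib sum_distrib_left sum.swap[of _ L])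
  finally show "(\<Sum>t<n. \<bar>(\<Sum>l\<in>L. a l * w l t) + y t\<bar>) < (\<Sum>l\<in>L. a l * (\<Sum>t<n. \<bar>w l t\<bar>)) + (\<Sum>t<n. \<bar>y t\<bar>)" .
qed


lemma divle: "(a::real) / b \<le> r \<Longrightarrow> b > 0 \<Longrightarrow> a \<le> r * b"
  by (simp add: pos_divide_le_eq)

theorem lemma5:
  fixes d n j :: nat
    and A :: "nat \<Rightarrow> nat \<Rightarrow> int"
    and b c u xk :: "nat \<Rightarrow> int"
    and \<alpha> :: "nat \<Rightarrow> int"
    and z :: "nat \<Rightarrow> nat \<Rightarrow> int"
  assumes "\<forall>i<n. 0 \<le> u i"
    and "feasible d n A b u xk"
    and "j \<ge> 2"
    and "\<forall>i\<in>{1..j}. sd_augmentation d n A b c u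
            (\<lambda>t. xk t + (\<Sum>l\<in>{1..<i}. \<alpha> l * z l t)) (\<alpha> i) (z i)"
    and "\<not> same_sign_pattern n (z 1) (z j)"
  shows "descent_ratio n c (z 1) > descent_ratio n c (z j)"
proof -
  define X where "X i = (\<lambda>t. xk t + (\<Sum>l\<in>{1..<i}. \<alpha> l * z l t))" for i
  define R where "R l = descent_ratio n c (z l)" for l
  define N where "N l = real_of_int (norm1 n (z l))" for l
  have sd: "sd_augmentation d n A b c u (X i) (\<alpha> i) (z i)" if "1 \<le> i" "i \<le> j" for i
    using assms(4) that unfolding X_def by auto
  have ker: "in_kernel d n A (z i)" and dneg: "dotp n c (z i) < 0" and apos: "\<alpha> i > 0"
    and feasn: "feasible d n A b u (\<lambda>t. X i t + \<alpha> i * z i t)"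
    and steep: "\<And>w. in_kernel d n A w \<Longrightarrow> w \<noteq> (\<lambda>_. 0) \<Longrightarrow> feasible d n A b u (\<lambda>t. X i t + w t)
                \<Longrightarrow> descent_ratio n c (z i) \<ge> descent_ratio n c w"
    if "1 \<le> i" "i \<le> j" for i
    using sd[OF that] unfolding sd_augmentation_def by auto
  have Xsuc: "X (Suc i) = (\<lambda>t. X i t + \<alpha> i * z i t)" if "1 \<le> i" for i
    using that unfolding X_def by (auto simp: sum.atLeastLessThan_Suc)
  have feasX: "feasible d n A b u (X i)" if "1 \<le> i" "i \<le> j" for i
    using that
  proof (induction i rule: dec_induct)
    case base
    have "X 1 = xk" unfolding X_def by simp
    then show ?case using assms(2) by simp
  next
    case (step k)
    then show ?case using feasn[of k] Xsuc[of k] by simp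
  qed
  have Npos: "N l > 0" if "1 \<le> l" "l \<le> j" for l
    using norm_pos[of n c "z l"] dneg[OF that] unfolding N_def by simp
  have Dl: "- real_of_int (dotp n c (z l)) = R l * N l" if "1 \<le> l" "l \<le> j" for l
    using ratio_eq[of n "z l" c] Npos[OF that] unfolding N_def R_def by simp
  have Rpos: "R l > 0" if "1 \<le> l" "l \<le> j" for l
  proof -
    have "R l * N l > 0" using Dl[OF that] dneg[OF that] by linarith
    thus ?thesis using Npos[OF that] by (simp add: zero_less_mult_iff)
  qed
  have G: "- real_of_int (dotp n c (\<lambda>t. (\<Sum>l\<in>{i..<m}. \<alpha> l * z l t) + z m t))
        \<le> R i * real_of_int (norm1 n (\<lambda>t. (\<Sum>l\<in>{i..<m}. \<alpha> l * z l t) + z m t))"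
    if "1 \<le> i" "i < m" "m \<le> j" for i m
  proof -
    define v where "v = (\<lambda>t. (\<Sum>l\<in>{i..<m}. \<alpha> l * z l t) + z m t)"
    have kv: "in_kernel d n A v" unfolding v_def
      by (rule kernel_lin) (use ker that in auto)
    have dv: "dotp n c v = (\<Sum>l\<in>{i..<m}. \<alpha> l * dotp n c (z l)) + dotp n c (z m)"
      unfolding v_def by (rule dotp_lin) simp
    have "(\<Sum>l\<in>{i..<m}. \<alpha> l * dotp n c (z l)) \<le> 0"
    proof (rule sum_nonpos)
      fix l assume "l \<in> {i..<m}"
      hence "1 \<le> l" "l \<le> j" using that by auto
      thus "\<alpha> l * dotp n c (z l) \<le> 0" using apos dneg by (meson less_imp_le mult_pos_neg)
    qed
    hence dvneg: "dotp n c v < 0" using dv dneg[of m] that by simp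
    have vnz: "v \<noteq> (\<lambda>_. 0)"
    proof
      assume "v = (\<lambda>_. 0)"
      hence "dotp n c v = 0" unfolding dotp_def by simp
      thus False using dvneg by simp
    qed
    have "(\<lambda>t. X i t + v t) = (\<lambda>t. X m t + z m t)"
    proof
      fix t
      have "(\<Sum>l\<in>{1..<i}. \<alpha> l * z l t) + (\<Sum>l\<in>{i..<m}. \<alpha> l * z l t) = (\<Sum>l\<in>{1..<m}. \<alpha> l * z l t)"
        using that by (intro sum.atLeastLessThan_concat) auto
      thus "X i t + v t = X m t + z m t" unfolding X_def v_def by simp
    qed
    moreover have "feasible d n A b u (\<lambda>t. X m t + z m t)"
      using feas_partial[OF feasX[of m] feasn[of m] _ ker[of m]] apos[of m] that by simp
    ultimately have "descent_ratio n c (z i) \<ge> descent_ratio n c v"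
      using steep[of i v] kv vnz that by simp
    moreover have "norm1 n v > 0" using norm_pos[of n c v] dvneg by simp
    ultimately have "- real_of_int (dotp n c v) / real_of_int (norm1 n v) \<le> R i"
      "real_of_int (norm1 n v) > 0" unfolding R_def descent_ratio_def by simp_all
    hence "- real_of_int (dotp n c v) \<le> R i * real_of_int (norm1 n v)"
      using divle by (metis minus_divide_left)
    thus ?thesis unfolding v_def .
  qed
  have mono1: "R (Suc i) \<le> R i" if "1 \<le> i" "i < j" for i
  proof -
    have g: "- real_of_int (dotp n c (\<lambda>t. \<alpha> i * z i t + z (Suc i) t))
        \<le> R i * real_of_int (norm1 n (\<lambda>t. \<alpha> i * z i t + z (Suc i) t))"
      using G[of i "Suc i"] that by simp
    have dl: "dotp n c (\<lambda>t. \<alpha> i * z i t + z (Suc i) t) = \<alpha> i * dotp n c (z i) + dotp n c (z (Suc i))"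
      using dotp_lin[of "{i}" n c \<alpha> z "z (Suc i)"] by simp
    have nl: "norm1 n (\<lambda>t. \<alpha> i * z i t + z (Suc i) t) \<le> \<alpha> i * norm1 n (z i) + norm1 n (z (Suc i))"
      using norm_le[of "{i}" \<alpha> n z "z (Suc i)"] apos[of i] that by simp
    have "R i * real_of_int (norm1 n (\<lambda>t. \<alpha> i * z i t + z (Suc i) t)) \<le> R i * (\<alpha> i * N i + N (Suc i))"
      using mult_left_mono[OF iffD2[OF of_int_le_iff nl], of "R i"] Rpos[of i] that
      unfolding N_def by simp
    moreover have "- real_of_int (dotp n c (\<lambda>t. \<alpha> i * z i t + z (Suc i) t))
       = \<alpha> i * (- real_of_int (dotp n c (z i))) + (- real_of_int (dotp n c (z (Suc i))))"
      unfolding dl by simp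
    moreover have "\<dots> = \<alpha> i * (R i * N i) + R (Suc i) * N (Suc i)"
      using Dl[of i] Dl[of "Suc i"] that by simp
    ultimately have "\<alpha> i * (R i * N i) + R (Suc i) * N (Suc i) \<le> R i * (\<alpha> i * N i + N (Suc i))"
      using g by linarith
    hence "R (Suc i) * N (Suc i) \<le> R i * N (Suc i)" by (simp add: algebra_simps)
    thus ?thesis using Npos[of "Suc i"] that by simp
  qed
  have chain: "R (l + k) \<le> R l" if "1 \<le> l" "l + k \<le> j" for l k
    using that
  proof (induction k)
    case 0 then show ?case by simp
  next
    case (Suc k)
    then have "R (Suc (l + k)) \<le> R (l + k)" using mono1[of "l+k"] by simp
    then show ?case using Suc by simp
  qed
  show ?thesis
  proof (rule ccontr)
    assume "\<not> ?thesis"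
    hence h: "R 1 \<le> R j" unfolding R_def by simp
    have Req: "R l = R 1" if "1 \<le> l" "l \<le> j" for l
      using chain[of 1 "l - 1"] chain[of l "j - l"] that h by simp
    obtain t0 where t0: "t0 < n" "z 1 t0 * z j t0 < 0"
      using assms(5) unfolding same_sign_pattern_def by (auto simp: not_le)
    define L where "L = {1..<j}"
    have j1: "1 \<le> (1::nat)" "1 < j" "j \<le> j" using assms(3) by auto
    have g: "- real_of_int (dotp n c (\<lambda>t. (\<Sum>l\<in>L. \<alpha> l * z l t) + z j t))
        \<le> R 1 * real_of_int (norm1 n (\<lambda>t. (\<Sum>l\<in>L. \<alpha> l * z l t) + z j t))"
      using G[OF j1] unfolding L_def .
    have nl: "norm1 n (\<lambda>t. (\<Sum>l\<in>L. \<alpha> l * z l t) + z j t) < (\<Sum>l\<in>L. \<alpha> l * norm1 n (z l)) + norm1 n (z j)"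
    proof (rule norm_lt[where lz=1 and tz=t0])
      show "finite L" unfolding L_def by simp
      show "\<forall>l\<in>L. 0 \<le> \<alpha> l" unfolding L_def using apos by (simp add: less_imp_le)
      show "1 \<in> L" unfolding L_def using j1 by simp
      show "0 < \<alpha> 1" using apos[of 1] j1 by simp
    qed (use t0 in simp_all)
    have "- real_of_int (dotp n c (\<lambda>t. (\<Sum>l\<in>L. \<alpha> l * z l t) + z j t))
        = (\<Sum>l\<in>L. real_of_int (\<alpha> l) * (- real_of_int (dotp n c (z l)))) + (- real_of_int (dotp n c (z j)))"
      by (subst dotp_lin) (simp_all add: L_def sum_negf)
    also have "\<dots> = (\<Sum>l\<in>L. real_of_int (\<alpha> l) * (R 1 * N l)) + R 1 * N j"
    proof -
      have "(\<Sum>l\<in>L. real_of_int (\<alpha> l) * (- real_of_int (dotp n c (z l)))) = (\<Sum>l\<in>L. real_of_int (\<alpha> l) * (R 1 * N l))"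
      proof (rule sum.cong)
        fix l assume "l \<in> L"
        hence "1 \<le> l" "l \<le> j" unfolding L_def by auto
        thus "real_of_int (\<alpha> l) * (- real_of_int (dotp n c (z l))) = real_of_int (\<alpha> l) * (R 1 * N l)"
          using Dl[of l] Req[of l] by simp
      qed simp
      moreover have "- real_of_int (dotp n c (z j)) = R 1 * N j" using Dl[of j] Req[of j] j1 by simp
      ultimately show ?thesis by simp
    qed
    also have "\<dots> = R 1 * real_of_int ((\<Sum>l\<in>L. \<alpha> l * norm1 n (z l)) + norm1 n (z j))"
      by (simp add: N_def sum_distrib_left algebra_simps)
    finally have e: "- real_of_int (dotp n c (\<lambda>t. (\<Sum>l\<in>L. \<alpha> l * z l t) + z j t))
        = R 1 * real_of_int ((\<Sum>l\<in>L. \<alpha> l * norm1 n (z l)) + norm1 n (z j))" .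
    have "R 1 * real_of_int (norm1 n (\<lambda>t. (\<Sum>l\<in>L. \<alpha> l * z l t) + z j t))
        < R 1 * real_of_int ((\<Sum>l\<in>L. \<alpha> l * norm1 n (z l)) + norm1 n (z j))"
      using mult_strict_left_mono[OF iffD2[OF of_int_less_iff nl], of "R 1"] Rpos[of 1] j1 by simp
    thus False using g e by simp
  qed
qed

end
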